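(* Let $X\sim P$ be a Borel probability measure on $\mathbb{R}^d$ and let $\alpha\in(0,\Pi(P))$ be such that $\mathrm{vol}_d(P_\alpha)>0$. Then: (i) for every non-singular $A\in\mathbb{R}^{d\times d}$, $b\in\mathbb{R}^d$ and $x\in\mathbb{R}^d$, $\mathrm{ID}_\alpha(Ax+b;P_{AX+b})=\mathrm{ID}_\alpha(x;P)$, where $P_{AX+b}$ is the law of $AX+b$; (ii) $P$ is halfspace symmetric about $x\in\mathbb{R}^d$ if and only if $\mathrm{ID}_\alpha(x;P)=(c,1)^\top$ for some $c\ge1/2$; (iii) if $x$ satisfies $\mathrm{HD}(x;P)=\Pi(P)$, then for every $u\in\mathbb{R}^d$ the first component of $\mathrm{ID}_\alpha(x+tu;P)$ is non-increasing and the second component is non-decreasing in $t\ge0$; (iv) for all $c_1,c_2\in\mathbb{R}$ the set $\{x\colon \mathrm{ID}^1_\alpha(x;P)\ge c_1,\ \mathrm{ID}^2_\alpha(x;P)\le c_2\}$ is convex, and it is compact whenever $c_1>0$; (v) $\mathrm{ID}^1_\alpha(\cdot;P)$ is upper semicontinuous, $\mathrm{ID}^2_\alpha(\cdot;P)$ is continuous on $\mathbb{R}^d$, and if $P$ has a density then $\mathrm{ID}_\alpha(\cdot;P)$ is continuous on $\mathbb{R}^d$; (vi) $\sup_{\|x\|\ge r}\mathrm{ID}^1_\alpha(x;P)\to0$ and $\inf_{\|x\|\ge r}\mathrm{ID}^2_\alpha(x;P)\to\infty$ as $r\to\infty$.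
   Context: For a Borel probability measure $P$ on $\mathbb{R}^d$ and $X\sim P$, the halfspace (Tukey) depth is $\mathrm{HD}(x;P)=\inf_{u\in\mathbb{R}^d}\Pr(u^\top X\le u^\top x)$; $\Pi(P)=\sup_{x}\mathrm{HD}(x;P)$; the central region is $P_\delta=\{x\colon\mathrm{HD}(x;P)\ge\delta\}$. For a convex body $K$, $\mathrm{Ill}(x;K)=\mathrm{vol}_d(\mathrm{conv}(K\cup\{x\}))$. The illumination depth is $\mathrm{ID}_\alpha(x;P)=(\mathrm{ID}^1_\alpha(x;P),\mathrm{ID}^2_\alpha(x;P))^\top=(\mathrm{HD}(x;P),\ \mathrm{Ill}(x;P_\alpha)/\mathrm{vol}_d(P_\alpha))^\top$. $P$ is halfspace symmetric about $x$ if every closed halfspace containing $x$ has $P$-probability at least $1/2$. *)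

theory Defs
  imports "HOL-Probability.Probability"
begin

definition HD :: "(real^'n) \<Rightarrow> (real^'n) measure \<Rightarrow> real" where
  "HD x P = (INF u. measure P {y. u \<bullet> y \<le> u \<bullet> x})"

definition maxdepth :: "(real^'n) measure \<Rightarrow> real" where
  "maxdepth P = (SUP x. HD x P)"

definition central_region :: "(real^'n) measure \<Rightarrow> real \<Rightarrow> (real^'n) set" where
  "central_region P \<delta> = {x. HD x P \<ge> \<delta>}"

definition Ill :: "(real^'n) \<Rightarrow> (real^'n) set \<Rightarrow> real" where
  "Ill x K = measure lborel (convex hull (K \<union> {x}))"

definition ID :: "real \<Rightarrow> (real^'n) \<Rightarrow> (real^'n) measure \<Rightarrow> real \<times> real" where
  "ID \<alpha> x P = (HD x P,
     Ill x (central_region P \<alpha>) / measure lborel (central_region P \<alpha>))"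

definition halfspace_symmetric :: "(real^'n) measure \<Rightarrow> (real^'n) \<Rightarrow> bool" where
  "halfspace_symmetric P x \<longleftrightarrow>
     (\<forall>u c. u \<noteq> 0 \<longrightarrow> u \<bullet> x \<le> c \<longrightarrow> measure P {y. u \<bullet> y \<le> c} \<ge> 1/2)"

definition upper_semicont :: "('a::topological_space \<Rightarrow> real) \<Rightarrow> bool" where
  "upper_semicont f \<longleftrightarrow> (\<forall>c. open {x. f x < c})"

end

theory Submission
  imports Defs "HOL-Analysis.Analysis"
begin

locale dp = prob_space P for P :: "(real^'n) measure" +
  assumes sets_P: "sets P = sets borel"
begin

lemma space_P[simp]: "space P = UNIV"
  using sets_eq_imp_space_eq[OF sets_P] by simp

lemma closed_sets[intro]: "closed S \<Longrightarrow> S \<in> sets P"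
  using sets_P borel_closed by auto

lemma borel_sets[intro]: "S \<in> sets borel \<Longrightarrow> S \<in> sets P"
  using sets_P by auto

lemma hs_sets[intro,simp]: "{y. u \<bullet> y \<le> c} \<in> sets P"
  by (intro closed_sets closed_halfspace_le)

lemma bdd_HD: "bdd_below ((\<lambda>u. measure P {y. u \<bullet> y \<le> u \<bullet> x}) ` UNIV)"
  by (rule bdd_belowI[of _ 0]) auto

lemma HD_le: "HD x P \<le> measure P {y. u \<bullet> y \<le> u \<bullet> x}"
  unfolding HD_def by (rule cINF_lower[OF bdd_HD]) simp

lemma HD_ge_iff: "d \<le> HD x P \<longleftrightarrow> (\<forall>u. d \<le> measure P {y. u \<bullet> y \<le> u \<bullet> x})"
  unfolding HD_def by (subst le_cINF_iff[OF _ bdd_HD]) auto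

lemma HD_less_iff: "HD x P < d \<longleftrightarrow> (\<exists>u. measure P {y. u \<bullet> y \<le> u \<bullet> x} < d)"
  unfolding HD_def by (subst cINF_less_iff[OF _ bdd_HD]) auto

lemma HD_nonneg: "0 \<le> HD x P"
  by (auto simp: HD_ge_iff)

lemma HD_le1: "HD x P \<le> 1"
  using HD_le[of x 0] prob_space by simp

lemma bdd_above_HD: "bdd_above ((\<lambda>x. HD x P) ` A)"
  by (rule bdd_aboveI[of _ 1]) (auto simp: HD_le1)

lemma HD_le_maxdepth: "HD x P \<le> maxdepth P"
  unfolding maxdepth_def by (rule cSUP_upper[OF _ bdd_above_HD]) auto

lemma HD_segment:
  assumes "0 \<le> t" "t \<le> 1"
  shows "min (HD x P) (HD y P) \<le> HD ((1 - t) *\<^sub>R x + t *\<^sub>R y) P"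
  unfolding HD_ge_iff
proof
  fix u
  let ?z = "(1 - t) *\<^sub>R x + t *\<^sub>R y"
  have "u \<bullet> ?z = (1 - t) * (u \<bullet> x) + t * (u \<bullet> y)"
    by (simp add: inner_add_right)
  then have "u \<bullet> x \<le> u \<bullet> ?z \<or> u \<bullet> y \<le> u \<bullet> ?z"
  proof (cases "u \<bullet> x \<le> u \<bullet> y")
    case True
    then have "t * (u \<bullet> x) \<le> t * (u \<bullet> y)" using assms by (intro mult_left_mono) auto
    then show ?thesis using \<open>u \<bullet> ?z = _\<close> by (auto simp: algebra_simps)
  next
    case False
    then have "(1 - t) * (u \<bullet> y) \<le> (1 - t) * (u \<bullet> x)" using assms by (intro mult_left_mono) auto
    then show ?thesis using \<open>u \<bullet> ?z = _\<close> by (auto simp: algebra_simps)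
  qed
  then show "min (HD x P) (HD y P) \<le> measure P {ya. u \<bullet> ya \<le> u \<bullet> ?z}"
  proof
    assume "u \<bullet> x \<le> u \<bullet> ?z"
    then have "measure P {ya. u \<bullet> ya \<le> u \<bullet> x} \<le> measure P {ya. u \<bullet> ya \<le> u \<bullet> ?z}"
      by (intro finite_measure_mono) auto
    then show ?thesis using HD_le[of x u] by linarith
  next
    assume "u \<bullet> y \<le> u \<bullet> ?z"
    then have "measure P {ya. u \<bullet> ya \<le> u \<bullet> y} \<le> measure P {ya. u \<bullet> ya \<le> u \<bullet> ?z}"
      by (intro finite_measure_mono) auto
    then show ?thesis using HD_le[of y u] by linarith
  qed
qed

lemma convex_central: "convex (central_region P d)"
  unfolding convex_alt central_region_def
proof (clarsimp)
  fix x y and t :: real assume "d \<le> HD x P" "d \<le> HD y P" "0 \<le> t" "t \<le> 1"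
  then show "d \<le> HD ((1 - t) *\<^sub>R x + t *\<^sub>R y) P"
    using HD_segment[of t x y] by linarith
qed

end

context dp begin

lemma hs_right_cont:
  assumes "measure P {y. u \<bullet> y \<le> c} < d"
  shows "\<exists>e>0. measure P {y. u \<bullet> y \<le> c + e} < d"
proof -
  define A where "A n = {y. u \<bullet> y \<le> c + 1 / Suc n}" for n :: nat
  have dec: "decseq A"
    unfolding A_def decseq_def by (auto simp: frac_le intro: order_trans)
  have int: "(\<Inter>n. A n) = {y. u \<bullet> y \<le> c}"
  proof (intro equalityI subsetI)
    fix y assume "y \<in> {y. u \<bullet> y \<le> c}"
    then show "y \<in> (\<Inter>n. A n)" unfolding A_def
      by (auto intro: order_trans[OF _ le_add_same_cancel1[THEN iffD2]])
  next
    fix y assume "y \<in> (\<Inter>n. A n)"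
    then have h: "\<forall>n. u \<bullet> y \<le> c + 1 / (1 + real n)" by (auto simp: A_def)
    have "u \<bullet> y \<le> c"
    proof (rule ccontr)
      assume "\<not> u \<bullet> y \<le> c"
      then have "u \<bullet> y - c > 0" by simp
      then obtain n where "1 / (1 + real n) < u \<bullet> y - c"
        using nat_approx_posE by (metis of_nat_Suc add.commute)
      with h[rule_format, of n] show False by simp
    qed
    then show "y \<in> {y. u \<bullet> y \<le> c}" by simp
  qed
  have "(\<lambda>n. measure P (A n)) \<longlonglongrightarrow> measure P {y. u \<bullet> y \<le> c}"
  proof -
    have "range A \<subseteq> sets P" unfolding A_def by auto
    from finite_Lim_measure_decseq[OF this dec] show ?thesis unfolding int .
  qed
  then have "eventually (\<lambda>n. measure P (A n) < d) sequentially"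
    using assms by (rule order_tendstoD)
  then obtain n where "measure P (A n) < d"
    unfolding eventually_sequentially by auto
  then show ?thesis unfolding A_def by (intro exI[of _ "1 / Suc n"]) auto
qed

lemma usc_HD: "open {x. HD x P < d}"
proof (subst open_subopen, intro ballI)
  fix x assume "x \<in> {x. HD x P < d}"
  then have "HD x P < d" by simp
  then obtain u where u: "measure P {y. u \<bullet> y \<le> u \<bullet> x} < d"
    unfolding HD_less_iff by blast
  then obtain e where e: "e > 0" "measure P {y. u \<bullet> y \<le> u \<bullet> x + e} < d"
    using hs_right_cont by blast
  let ?T = "{z. u \<bullet> z < u \<bullet> x + e}"
  have "?T \<subseteq> {x. HD x P < d}"
  proof
    fix z assume "z \<in> ?T"
    then have "measure P {y. u \<bullet> y \<le> u \<bullet> z} \<le> measure P {y. u \<bullet> y \<le> u \<bullet> x + e}"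
      by (intro finite_measure_mono hs_sets) auto
    then have "HD z P < d" using HD_le[of z u] e(2) by linarith
    then show "z \<in> {x. HD x P < d}" by simp
  qed
  moreover have "open ?T" by (rule open_halfspace_lt)
  ultimately show "\<exists>T. open T \<and> x \<in> T \<and> T \<subseteq> {x. HD x P < d}"
    using e(1) by (intro exI[of _ ?T]) simp
qed

lemma closed_central: "closed (central_region P d)"
proof -
  have "central_region P d = - {x. HD x P < d}"
    by (auto simp: central_region_def)
  then show ?thesis using usc_HD by (simp add: closed_def)
qed

lemma tail:
  assumes "e > 0"
  shows "\<exists>R. \<forall>r\<ge>R. measure P {y. r \<le> norm y} < e"
proof -
  define A where "A n = {y::real^'n. real n \<le> norm y}" for n :: nat
  have dec: "decseq A" unfolding A_def decseq_def by auto
  have int: "(\<Inter>n. A n) = {}"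
    by (auto simp: A_def) (meson not_le reals_Archimedean2)
  have "range A \<subseteq> sets P" unfolding A_def by (auto intro!: closed_sets closed_Collect_le continuous_intros)
  then have "(\<lambda>n. measure P (A n)) \<longlonglongrightarrow> 0"
    using finite_Lim_measure_decseq[OF _ dec] int by simp
  then have "eventually (\<lambda>n. measure P (A n) < e) sequentially"
    using assms by (rule order_tendstoD)
  then obtain n where n: "measure P (A n) < e"
    unfolding eventually_sequentially by auto
  show ?thesis
  proof (intro exI allI impI)
    fix r assume "real n \<le> r"
    then have "measure P {y. r \<le> norm y} \<le> measure P (A n)"
      unfolding A_def by (intro finite_measure_mono closed_sets closed_Collect_le continuous_intros) auto
    then show "measure P {y. r \<le> norm y} < e" using n by simp
  qed
qed

lemma HD_far: "HD x P \<le> measure P {y. norm x \<le> norm y}"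
proof (cases "x = 0")
  case True
  have "HD x P \<le> 1" by (rule HD_le1)
  also have "1 = measure P {y. norm x \<le> norm y}" using True prob_space by simp
  finally show ?thesis .
next
  case False
  have "HD x P \<le> measure P {y. (-x) \<bullet> y \<le> (-x) \<bullet> x}" by (rule HD_le)
  also have "\<dots> \<le> measure P {y. norm x \<le> norm y}"
  proof (intro finite_measure_mono closed_sets closed_Collect_le; (intro continuous_intros)?)
    show "{y. - x \<bullet> y \<le> - x \<bullet> x} \<subseteq> {y. norm x \<le> norm y}"
    proof
      fix y assume "y \<in> {y. - x \<bullet> y \<le> - x \<bullet> x}"
      then have "x \<bullet> x \<le> x \<bullet> y" by simp
      also have "\<dots> \<le> norm x * norm y" by (rule norm_cauchy_schwarz)
      finally have "norm x * norm x \<le> norm x * norm y" by (simp add: dot_square_norm power2_eq_square)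
      then show "y \<in> {y. norm x \<le> norm y}" using False by simp
    qed
  qed
  finally show ?thesis .
qed

lemma bounded_central:
  assumes "d > 0"
  shows "bounded (central_region P d)"
proof -
  obtain R where R: "\<forall>r\<ge>R. measure P {y. r \<le> norm y} < d" using tail[OF assms] by blast
  have "central_region P d \<subseteq> cball 0 R"
  proof
    fix x assume x: "x \<in> central_region P d"
    show "x \<in> cball 0 R"
    proof (rule ccontr)
      assume "x \<notin> cball 0 R"
      then have "R \<le> norm x" by simp
      then have "HD x P < d" using HD_far[of x] R by fastforce
      then show False using x by (simp add: central_region_def)
    qed
  qed
  then show ?thesis using bounded_cball bounded_subset by blast
qed

lemma compact_central: "d > 0 \<Longrightarrow> compact (central_region P d)"
  using bounded_central closed_central by (simp add: compact_eq_bounded_closed)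

end

lemma fubini_basis:
  fixes S :: "'a::euclidean_space set" and b :: 'a
  assumes b: "b \<in> Basis" and S: "S \<in> sets borel"
  shows "emeasure lborel S = (\<integral>\<^sup>+x. emeasure lborel {y. (\<Sum>c\<in>Basis-{b}. x c *\<^sub>R c) + y *\<^sub>R b \<in> S}
            \<partial>(Pi\<^sub>M (Basis-{b}) (\<lambda>_. lborel)))"
proof -
  interpret product_sigma_finite "\<lambda>_. lborel :: real measure" by standard
  let ?f = "\<lambda>f. \<Sum>b\<in>Basis. f b *\<^sub>R b :: 'a"
  let ?M = "Pi\<^sub>M Basis (\<lambda>_. lborel :: real measure)"
  have ins: "insert b (Basis - {b}) = Basis" using b by auto
  have fm: "?f \<in> measurable ?M borel" by measurable
  have "emeasure lborel S = emeasure (distr ?M borel ?f) S"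
    by (subst lborel_eq) rule
  also have "\<dots> = emeasure ?M (?f -` S \<inter> space ?M)"
    by (rule emeasure_distr[OF fm S])
  also have "\<dots> = (\<integral>\<^sup>+x. indicator (?f -` S \<inter> space ?M) x \<partial>?M)"
    using fm S by (subst nn_integral_indicator) (auto intro!: measurable_sets)
  also have "\<dots> = (\<integral>\<^sup>+x. (\<integral>\<^sup>+y. indicator (?f -` S \<inter> space ?M) (x(b := y)) \<partial>lborel) \<partial>(Pi\<^sub>M (Basis-{b}) (\<lambda>_. lborel)))"
    using product_nn_integral_insert[of "Basis - {b}" b "indicator (?f -` S \<inter> space ?M)"] fm S
    unfolding ins by (auto intro!: borel_measurable_indicator measurable_sets)
  also have "\<dots> = (\<integral>\<^sup>+x. emeasure lborel {y. (\<Sum>c\<in>Basis-{b}. x c *\<^sub>R c) + y *\<^sub>R b \<in> S}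
            \<partial>(Pi\<^sub>M (Basis-{b}) (\<lambda>_. lborel)))"
  proof (intro nn_integral_cong)
    fix x assume x: "x \<in> space (Pi\<^sub>M (Basis-{b}) (\<lambda>_. lborel :: real measure))"
    have eq: "?f (x(b := y)) = (\<Sum>c\<in>Basis-{b}. x c *\<^sub>R c) + y *\<^sub>R b" for y
    proof -
      have "?f (x(b := y)) = (x(b := y)) b *\<^sub>R b + (\<Sum>c\<in>Basis-{b}. (x(b := y)) c *\<^sub>R c)"
        using b by (subst sum.remove[of _ b]) auto
      also have "(\<Sum>c\<in>Basis-{b}. (x(b := y)) c *\<^sub>R c) = (\<Sum>c\<in>Basis-{b}. x c *\<^sub>R c)"
        by (intro sum.cong) auto
      finally show ?thesis by simp
    qed
    have sp: "x(b := y) \<in> space ?M" for y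
      using x b by (auto simp: space_PiM PiE_def extensional_def)
    have "indicator (?f -` S \<inter> space ?M) (x(b := y)) =
          (indicator {y. (\<Sum>c\<in>Basis-{b}. x c *\<^sub>R c) + y *\<^sub>R b \<in> S} y :: ennreal)" for y
      using sp[of y] eq[of y] by (auto split: split_indicator)
    then have "(\<integral>\<^sup>+y. indicator (?f -` S \<inter> space ?M) (x(b := y)) \<partial>lborel) =
        (\<integral>\<^sup>+y. indicator {y. (\<Sum>c\<in>Basis-{b}. x c *\<^sub>R c) + y *\<^sub>R b \<in> S} y \<partial>lborel)"
      by simp
    also have "\<dots> = emeasure lborel {y. (\<Sum>c\<in>Basis-{b}. x c *\<^sub>R c) + y *\<^sub>R b \<in> S}"
    proof (rule nn_integral_indicator)
      have "(\<lambda>y::real. (\<Sum>c\<in>Basis-{b}. x c *\<^sub>R c) + y *\<^sub>R b) \<in> borel_measurable lborel"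
        by measurable
      from measurable_sets[OF this S] show "{y. (\<Sum>c\<in>Basis-{b}. x c *\<^sub>R c) + y *\<^sub>R b \<in> S} \<in> sets lborel"
        by (simp add: vimage_def)
    qed
    finally show "(\<integral>\<^sup>+y. indicator (?f -` S \<inter> space ?M) (x(b := y)) \<partial>lborel) =
        emeasure lborel {y. (\<Sum>c\<in>Basis-{b}. x c *\<^sub>R c) + y *\<^sub>R b \<in> S}" .
  qed
  finally show ?thesis .
qed

lemma hull_insert_K:
  fixes K :: "'a::real_vector set"
  assumes "convex K" "K \<noteq> {}"
  shows "convex hull (insert a K) = {(1 - u) *\<^sub>R a + u *\<^sub>R x |x u. 0 \<le> u \<and> u \<le> 1 \<and> x \<in> K}"
proof -
  have "convex hull K = K" using assms(1) by (rule convex_hull_eq[THEN iffD2])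
  then show ?thesis using assms(2) by (simp add: convex_hull_insert_alt)
qed

lemma fiber_ineq:
  fixes K :: "'a::euclidean_space set" and p h b :: 'a
  assumes K: "compact K" "convex K" "K \<noteq> {}" and b: "norm b = 1" and w: "0 \<le> w" "w \<le> 1"
  defines "F \<equiv> \<lambda>\<tau>. {y::real. h + y *\<^sub>R b \<in> convex hull (insert (p + \<tau> *\<^sub>R b) K)}"
  shows "emeasure lborel (F ((1-w) * s1 + w * s2)) \<le> ennreal (1-w) * emeasure lborel (F s1) + ennreal w * emeasure lborel (F s2)"
proof -
  have memb: "y \<in> F \<tau> \<longleftrightarrow> (\<exists>u k. 0 \<le> u \<and> u \<le> 1 \<and> k \<in> K \<and> h + y *\<^sub>R b = (1-u) *\<^sub>R (p + \<tau> *\<^sub>R b) + u *\<^sub>R k)" for y \<tau>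
    unfolding F_def hull_insert_K[OF K(2,3)] by blast
  have cpt: "compact (F \<tau>)" for \<tau>
  proof -
    let ?L = "convex hull (insert (p + \<tau> *\<^sub>R b) K)"
    have Lc: "compact ?L" using K(1) by (intro compact_convex_hull) auto
    have "closed (F \<tau>)"
    proof -
      have "F \<tau> = (\<lambda>y. h + y *\<^sub>R b) -` ?L" by (auto simp: F_def)
      moreover have "closed ((\<lambda>y. h + y *\<^sub>R b) -` ?L)"
        by (intro continuous_closed_vimage compact_imp_closed Lc) (intro continuous_intros)
      ultimately show ?thesis by simp
    qed
    moreover have "bounded (F \<tau>)"
    proof -
      obtain B where B: "\<forall>q\<in>?L. norm q \<le> B" using compact_imp_bounded[OF Lc] bounded_iff by blast
      have "\<forall>y\<in>F \<tau>. norm y \<le> B + norm h"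
      proof
        fix y assume "y \<in> F \<tau>"
        then have "norm (h + y *\<^sub>R b) \<le> B" using B by (auto simp: F_def)
        moreover have "norm (y *\<^sub>R b) \<le> norm (h + y *\<^sub>R b) + norm h"
          using norm_triangle_ineq4[of "h + y *\<^sub>R b" h] by simp
        ultimately show "norm y \<le> B + norm h" using b by simp
      qed
      then show ?thesis by (auto simp: bounded_iff)
    qed
    ultimately show ?thesis by (simp add: compact_eq_bounded_closed)
  qed
  have cvx: "convex (F \<tau>)" for \<tau>
  proof -
    let ?L = "convex hull (insert (p + \<tau> *\<^sub>R b) K)"
    have "convex ?L" by (rule convex_convex_hull)
    show ?thesis unfolding convex_alt
    proof (intro ballI allI impI)
      fix x y and u :: real assume xy: "x \<in> F \<tau>" "y \<in> F \<tau>" and u: "0 \<le> u \<and> u \<le> 1"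
      have "(1 - u) *\<^sub>R (h + x *\<^sub>R b) + u *\<^sub>R (h + y *\<^sub>R b) \<in> ?L"
        using xy u \<open>convex ?L\<close> unfolding F_def convex_alt by blast
      moreover have "(1 - u) *\<^sub>R (h + x *\<^sub>R b) + u *\<^sub>R (h + y *\<^sub>R b) = h + ((1 - u) * x + u * y) *\<^sub>R b"
        by (simp add: algebra_simps)
      ultimately show "(1 - u) *\<^sub>R x + u *\<^sub>R y \<in> F \<tau>" by (simp add: F_def)
    qed
  qed
  have ival: "\<exists>a c. F \<tau> = {a..c}" for \<tau>
    using connected_compact_interval_1[of "F \<tau>"] cpt[of \<tau>] convex_connected[OF cvx[of \<tau>]] by blast
  let ?z = "(1-w) * s1 + w * s2"
  have key: "\<exists>y1\<in>F s1. \<exists>y2\<in>F s2. y = (1-w)*y1 + w*y2" if y: "y \<in> F ?z" for y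
  proof -
    obtain u k where uk: "0 \<le> u" "u \<le> 1" "k \<in> K" and eq: "h + y *\<^sub>R b = (1-u) *\<^sub>R (p + ?z *\<^sub>R b) + u *\<^sub>R k"
      using y memb by blast
    define y1 where "y1 = y + (1-u)* (s1 - ?z)"
    define y2 where "y2 = y + (1-u)* (s2 - ?z)"
    have "h + y1 *\<^sub>R b = (1-u) *\<^sub>R (p + s1 *\<^sub>R b) + u *\<^sub>R k"
    proof -
      have "h + y1 *\<^sub>R b = (h + y *\<^sub>R b) + ((1-u)* (s1 - ?z)) *\<^sub>R b" by (simp add: y1_def algebra_simps)
      also have "\<dots> = (1-u) *\<^sub>R (p + s1 *\<^sub>R b) + u *\<^sub>R k" unfolding eq by (simp add: algebra_simps)
      finally show ?thesis .
    qed
    then have 1: "y1 \<in> F s1" using uk memb by blast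
    have "h + y2 *\<^sub>R b = (1-u) *\<^sub>R (p + s2 *\<^sub>R b) + u *\<^sub>R k"
    proof -
      have "h + y2 *\<^sub>R b = (h + y *\<^sub>R b) + ((1-u)* (s2 - ?z)) *\<^sub>R b" by (simp add: y2_def algebra_simps)
      also have "\<dots> = (1-u) *\<^sub>R (p + s2 *\<^sub>R b) + u *\<^sub>R k" unfolding eq by (simp add: algebra_simps)
      finally show ?thesis .
    qed
    then have 2: "y2 \<in> F s2" using uk memb by blast
    have "y = (1-w)*y1 + w*y2" by (simp add: y1_def y2_def algebra_simps)
    with 1 2 show ?thesis by blast
  qed
  show ?thesis
  proof (cases "F s1 = {} \<or> F s2 = {}")
    case True
    then have "F ?z = {}" using key by blast
    then show ?thesis by simp
  next
    case False
    obtain a1 c1 where 1: "F s1 = {a1..c1}" using ival by blast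
    obtain a2 c2 where 2: "F s2 = {a2..c2}" using ival by blast
    have le: "a1 \<le> c1" "a2 \<le> c2" using False 1 2 by auto
    have sub: "F ?z \<subseteq> {(1-w)*a1 + w*a2 .. (1-w)*c1 + w*c2}"
    proof
      fix y assume "y \<in> F ?z"
      then obtain y1 y2 where y1: "y1 \<in> {a1..c1}" and y2: "y2 \<in> {a2..c2}" and y: "y = (1-w)*y1 + w*y2"
        using key 1 2 by blast
      have "(1-w)*a1 \<le> (1-w)*y1" "w*a2 \<le> w*y2" "(1-w)*y1 \<le> (1-w)*c1" "w*y2 \<le> w*c2"
        using y1 y2 w by (auto intro!: mult_left_mono)
      then show "y \<in> {(1-w)*a1 + w*a2 .. (1-w)*c1 + w*c2}" using y by simp
    qed
    have "emeasure lborel (F ?z) \<le> emeasure lborel {(1-w)*a1 + w*a2 .. (1-w)*c1 + w*c2}"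
      by (intro emeasure_mono sub) simp
    also have "(1-w)*a1 + w*a2 \<le> (1-w)*c1 + w*c2"
      using le w by (intro add_mono mult_left_mono) auto
    then have "emeasure lborel {(1-w)*a1 + w*a2 .. (1-w)*c1 + w*c2} = ennreal ((1-w)*(c1 - a1) + w*(c2 - a2))"
      by (subst emeasure_lborel_Icc) (auto simp: algebra_simps)
    also have "\<dots> = ennreal (1-w) * ennreal (c1 - a1) + ennreal w * ennreal (c2 - a2)"
      using le w by (simp add: ennreal_mult)
    also have "\<dots> = ennreal (1-w) * emeasure lborel (F s1) + ennreal w * emeasure lborel (F s2)"
      using le 1 2 by simp
    finally show ?thesis .
  qed
qed


lemma fiber_measurable:
  fixes S :: "'a::euclidean_space set" and b :: 'a
  assumes S: "S \<in> sets borel"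
  shows "(\<lambda>x. emeasure lborel {y. (\<Sum>c\<in>Basis-{b}. x c *\<^sub>R c) + y *\<^sub>R b \<in> S})
     \<in> borel_measurable (Pi\<^sub>M (Basis-{b}) (\<lambda>_. lborel))"
proof -
  let ?N = "Pi\<^sub>M (Basis-{b}) (\<lambda>_. lborel :: real measure)"
  have eq: "emeasure lborel {y. (\<Sum>c\<in>Basis-{b}. x c *\<^sub>R c) + y *\<^sub>R b \<in> S} =
     (\<integral>\<^sup>+y. indicator S ((\<Sum>c\<in>Basis-{b}. x c *\<^sub>R c) + y *\<^sub>R b) \<partial>lborel)" for x
  proof -
    have "(\<lambda>y::real. (\<Sum>c\<in>Basis-{b}. x c *\<^sub>R c) + y *\<^sub>R b) \<in> borel_measurable lborel"
      by measurable
    from measurable_sets[OF this S] have m: "{y. (\<Sum>c\<in>Basis-{b}. x c *\<^sub>R c) + y *\<^sub>R b \<in> S} \<in> sets lborel"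
      by (simp add: vimage_def)
    show ?thesis
      by (subst nn_integral_indicator[OF m, symmetric]) (auto intro!: nn_integral_cong split: split_indicator)
  qed
  have "(\<lambda>(x, y). indicator S ((\<Sum>c\<in>Basis-{b}. x c *\<^sub>R c) + y *\<^sub>R b) :: ennreal)
        \<in> borel_measurable (?N \<Otimes>\<^sub>M lborel)"
    using S by measurable
  then have "(\<lambda>x. \<integral>\<^sup>+y. indicator S ((\<Sum>c\<in>Basis-{b}. x c *\<^sub>R c) + y *\<^sub>R b) \<partial>lborel) \<in> borel_measurable ?N"
    by (rule lborel.borel_measurable_nn_integral)
  then show ?thesis unfolding eq .
qed

lemma ill_convex_basis:
  fixes K :: "'a::euclidean_space set" and p b :: 'a
  assumes K: "compact K" "convex K" and b: "b \<in> Basis" and w: "0 \<le> w" "w \<le> 1"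
  shows "measure lborel (convex hull (insert (p + ((1-w) * s1 + w * s2) *\<^sub>R b) K))
     \<le> (1-w) * measure lborel (convex hull (insert (p + s1 *\<^sub>R b) K))
       + w * measure lborel (convex hull (insert (p + s2 *\<^sub>R b) K))"
proof (cases "K = {}")
  case True
  then show ?thesis by simp
next
  case False
  let ?L = "\<lambda>\<tau>. convex hull (insert (p + \<tau> *\<^sub>R b) K)"
  let ?N = "Pi\<^sub>M (Basis-{b}) (\<lambda>_. lborel :: real measure)"
  let ?F = "\<lambda>\<tau> x. emeasure lborel {y. (\<Sum>c\<in>Basis-{b}. x c *\<^sub>R c) + y *\<^sub>R b \<in> ?L \<tau>}"
  have Lc: "compact (?L \<tau>)" for \<tau> using K(1) by (intro compact_convex_hull) auto
  then have Lb: "?L \<tau> \<in> sets borel" for \<tau> by (simp add: borel_compact)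
  have fin: "emeasure lborel (?L \<tau>) = ennreal (measure lborel (?L \<tau>))" for \<tau>
    using fmeasurable_compact[OF Lc[of \<tau>]] by (rule emeasure_eq_measure2)
  have nb: "norm b = 1" using b by simp
  have "ennreal (measure lborel (?L ((1-w) * s1 + w * s2))) = (\<integral>\<^sup>+x. ?F ((1-w) * s1 + w * s2) x \<partial>?N)"
    unfolding fin[symmetric] by (rule fubini_basis[OF b Lb])
  also have "\<dots> \<le> (\<integral>\<^sup>+x. ennreal (1-w) * ?F s1 x + ennreal w * ?F s2 x \<partial>?N)"
    by (intro nn_integral_mono fiber_ineq[OF K False nb w, of _ p]) 
  also have "\<dots> = ennreal (1-w) * (\<integral>\<^sup>+x. ?F s1 x \<partial>?N) + ennreal w * (\<integral>\<^sup>+x. ?F s2 x \<partial>?N)"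
  proof -
    have m: "?F \<tau> \<in> borel_measurable ?N" for \<tau> by (rule fiber_measurable[OF Lb])
    have "(\<integral>\<^sup>+x. ennreal (1-w) * ?F s1 x + ennreal w * ?F s2 x \<partial>?N)
        = (\<integral>\<^sup>+x. ennreal (1-w) * ?F s1 x \<partial>?N) + (\<integral>\<^sup>+x. ennreal w * ?F s2 x \<partial>?N)"
      by (rule nn_integral_add) (auto intro!: borel_measurable_times_ennreal m)
    also have "\<dots> = ennreal (1-w) * (\<integral>\<^sup>+x. ?F s1 x \<partial>?N) + ennreal w * (\<integral>\<^sup>+x. ?F s2 x \<partial>?N)"
      by (simp add: nn_integral_cmult m)
    finally show ?thesis .
  qed
  also have "\<dots> = ennreal (1-w) * ennreal (measure lborel (?L s1)) + ennreal w * ennreal (measure lborel (?L s2))"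
    unfolding fin[symmetric] by (simp add: fubini_basis[OF b Lb])
  also have "\<dots> = ennreal ((1-w) * measure lborel (?L s1) + w * measure lborel (?L s2))"
    using w by (simp add: ennreal_mult)
  finally show ?thesis
    using w by (subst (asm) ennreal_le_iff) (auto intro!: add_nonneg_nonneg mult_nonneg_nonneg)
qed

lemma emeasure_lborel_shift:
  fixes A :: "real set"
  assumes "A \<in> sets borel"
  shows "emeasure lborel {y. y - t \<in> A} = emeasure lborel A"
proof -
  have "emeasure lborel A = emeasure (distr lborel borel ((+) (-t))) A"
    by (simp add: lborel_distr_plus)
  also have "\<dots> = emeasure lborel ((+) (-t) -` A \<inter> space lborel)"
    using assms by (intro emeasure_distr) auto
  also have "(+) (-t) -` A \<inter> space lborel = {y. y - t \<in> A}" by auto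
  finally show ?thesis ..
qed

lemma shear_emeasure:
  fixes S :: "(real^'n) set" and m n :: 'n
  assumes mn: "m \<noteq> n" and S: "S \<in> sets borel"
  defines "h \<equiv> \<lambda>v::real^'n. \<chi> i. if i = m then v $ m + v $ n else v $ i"
  shows "emeasure lborel (h ` S) = emeasure lborel S"
proof -
  define g where "g = (\<lambda>v::real^'n. \<chi> i. if i = m then v $ m - v $ n else v $ i)"
  have gh: "g (h v) = v" for v using mn by (simp add: g_def h_def vec_eq_iff)
  have hg: "h (g v) = v" for v using mn by (simp add: g_def h_def vec_eq_iff)
  have img: "h ` S = g -` S"
    by (auto simp: image_iff gh hg) (metis hg)
  have "linear g" unfolding g_def
    by (rule linearI) (auto simp: vec_eq_iff algebra_simps)
  then have gc: "continuous_on UNIV g"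
    using linear_continuous_on linear_conv_bounded_linear by blast
  then have "g \<in> borel_measurable borel" by (rule borel_measurable_continuous_onI)
  then have hS: "h ` S \<in> sets borel" unfolding img using S by (rule measurable_sets_borel)
  let ?b = "axis m (1::real)"
  have b: "?b \<in> Basis" by simp
  let ?N = "Pi\<^sub>M (Basis-{?b}) (\<lambda>_. lborel :: real measure)"
  let ?hx = "\<lambda>x. (\<Sum>c\<in>Basis-{?b}. x c *\<^sub>R c) :: real^'n"
  have "emeasure lborel (h ` S) = (\<integral>\<^sup>+x. emeasure lborel {y. ?hx x + y *\<^sub>R ?b \<in> h ` S} \<partial>?N)"
    by (rule fubini_basis[OF b hS])
  also have "\<dots> = (\<integral>\<^sup>+x. emeasure lborel {y. ?hx x + y *\<^sub>R ?b \<in> S} \<partial>?N)"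
  proof (intro nn_integral_cong)
    fix x
    let ?t = "?hx x $ n"
    have "g (?hx x + y *\<^sub>R ?b) = ?hx x + (y - ?t) *\<^sub>R ?b" for y
      using mn by (auto simp: g_def vec_eq_iff axis_def)
    then have "{y. ?hx x + y *\<^sub>R ?b \<in> h ` S} = {y. y - ?t \<in> {y. ?hx x + y *\<^sub>R ?b \<in> S}}"
      unfolding img by auto
    also have "emeasure lborel \<dots> = emeasure lborel {y. ?hx x + y *\<^sub>R ?b \<in> S}"
    proof (rule emeasure_lborel_shift)
      have "(\<lambda>y::real. ?hx x + y *\<^sub>R ?b) \<in> borel_measurable borel" by measurable
      from measurable_sets_borel[OF this S] show "{y. ?hx x + y *\<^sub>R ?b \<in> S} \<in> sets borel"
        by (simp add: vimage_def)
    qed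
    finally show "emeasure lborel {y. ?hx x + y *\<^sub>R ?b \<in> h ` S} = emeasure lborel {y. ?hx x + y *\<^sub>R ?b \<in> S}" .
  qed
  also have "\<dots> = emeasure lborel S"
    by (rule fubini_basis[OF b S, symmetric])
  finally show ?thesis .
qed


lemma linear_measure_const:
  fixes f :: "real^'n \<Rightarrow> real^'n"
  assumes "linear f"
  shows "\<exists>c\<ge>0. \<forall>S\<in>lmeasurable. f ` S \<in> lmeasurable \<and> measure lebesgue (f ` S) = c * measure lebesgue S"
proof (rule induct_linear_elementary[OF assms])
  fix f g :: "real^'n \<Rightarrow> real^'n"
  assume "linear f" "linear g"
    and f: "\<exists>c\<ge>0. \<forall>S\<in>lmeasurable. f ` S \<in> lmeasurable \<and> measure lebesgue (f ` S) = c * measure lebesgue S"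
    and g: "\<exists>c\<ge>0. \<forall>S\<in>lmeasurable. g ` S \<in> lmeasurable \<and> measure lebesgue (g ` S) = c * measure lebesgue S"
  from f obtain c where c: "c \<ge> 0" "\<forall>S\<in>lmeasurable. f ` S \<in> lmeasurable \<and> measure lebesgue (f ` S) = c * measure lebesgue S" by blast
  from g obtain d where d: "d \<ge> 0" "\<forall>S\<in>lmeasurable. g ` S \<in> lmeasurable \<and> measure lebesgue (g ` S) = d * measure lebesgue S" by blast
  show "\<exists>c\<ge>0. \<forall>S\<in>lmeasurable. (f \<circ> g) ` S \<in> lmeasurable \<and> measure lebesgue ((f \<circ> g) ` S) = c * measure lebesgue S"
  proof (intro exI[of _ "c * d"] conjI ballI)
    fix S :: "(real^'n) set" assume S: "S \<in> lmeasurable"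
    have gS: "g ` S \<in> lmeasurable" "measure lebesgue (g ` S) = d * measure lebesgue S" using d S by auto
    have fgS: "f ` (g ` S) \<in> lmeasurable" "measure lebesgue (f ` (g ` S)) = c * measure lebesgue (g ` S)"
      using c gS by auto
    have e: "(f \<circ> g) ` S = f ` (g ` S)" by (simp add: image_comp)
    show "(f \<circ> g) ` S \<in> lmeasurable" using fgS e by simp
    show "measure lebesgue ((f \<circ> g) ` S) = c * d * measure lebesgue S" using fgS gS e by simp
  qed (use c d in simp)
next
  fix f :: "real^'n \<Rightarrow> real^'n" and i
  assume "linear f" and 0: "\<And>x. f x $ i = 0"
  then have "\<not> inj f"
    by (metis (full_types) linear_injective_imp_surjective one_neq_zero surjE vec_component)
  show "\<exists>c\<ge>0. \<forall>S\<in>lmeasurable. f ` S \<in> lmeasurable \<and> measure lebesgue (f ` S) = c * measure lebesgue S"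
  proof (intro exI[of _ 0] conjI ballI)
    fix S :: "(real^'n) set"
    have neg: "negligible (f ` S)" using negligible_linear_singular_image \<open>linear f\<close> \<open>\<not> inj f\<close> by blast
    then show "f ` S \<in> lmeasurable"
      using negligible_iff_null_sets fmeasurableI_null_sets by blast
    show "measure lebesgue (f ` S) = 0 * measure lebesgue S"
      using neg by (simp add: negligible_imp_measure0)
  qed simp
next
  fix c :: "'n \<Rightarrow> real"
  show "\<exists>d\<ge>0. \<forall>S\<in>lmeasurable. (\<lambda>x. \<chi> i. c i * x $ i) ` S \<in> lmeasurable \<and>
      measure lebesgue ((\<lambda>x. \<chi> i. c i * x $ i) ` S) = d * measure lebesgue S"
    by (intro exI[of _ "\<bar>prod c UNIV\<bar>"]) (auto simp: measurable_stretch measure_stretch)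
next
  fix m n :: 'n
  assume "m \<noteq> n"
  let ?h = "\<lambda>v::(real, 'n) vec. \<chi> i. v $ Transposition.transpose m n i"
  have lin: "linear ?h"
    by (rule linearI) (simp_all add: plus_vec_def scaleR_vec_def)
  have meq: "measure lebesgue (?h ` cbox a b) = 1 * measure lebesgue (cbox a b)" for a b
  proof (cases "cbox a b = {}")
    case True then show ?thesis
      by simp
  next
    case False
    then have him: "?h ` (cbox a b) \<noteq> {}"
      by blast
    have eq: "?h ` (cbox a b) = cbox (?h a) (?h b)"
      by (auto simp: image_iff lambda_swap_Galois mem_box_cart) (metis transpose_involutory)+
    show ?thesis
      using him prod.permute [OF permutes_swap_id, where S=UNIV and g="\<lambda>i. (b - a)$i", symmetric]
      by (simp add: eq content_cbox_cart False)
  qed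
  show "\<exists>c\<ge>0. \<forall>S\<in>lmeasurable. ?h ` S \<in> lmeasurable \<and> measure lebesgue (?h ` S) = c * measure lebesgue S"
  proof (intro exI[of _ 1] conjI ballI)
    fix S :: "(real^'n) set" assume S: "S \<in> lmeasurable"
    note ms = measure_linear_sufficient[OF lin S meq]
    from ms show "?h ` S \<in> lmeasurable" by (rule conjunct1)
    from ms show "measure lebesgue (?h ` S) = 1 * measure lebesgue S" by linarith
  qed simp
next
  fix m n :: 'n
  assume "m \<noteq> n"
  let ?h = "\<lambda>v::(real, 'n) vec. \<chi> i. if i = m then v $ m + v $ n else v $ i"
  have lin: "linear ?h"
    by (rule linearI) (auto simp: algebra_simps plus_vec_def scaleR_vec_def vec_eq_iff)
  have meq: "measure lebesgue (?h ` cbox a b) = 1 * measure lebesgue (cbox a b)" for a b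
  proof -
    have hc: "compact (?h ` cbox a b)"
      using lin by (intro compact_continuous_image compact_cbox linear_continuous_on linear_conv_bounded_linear[THEN iffD1])
    have "measure lebesgue (?h ` cbox a b) = measure lborel (?h ` cbox a b)"
      using hc by (simp add: borel_compact)
    also have "\<dots> = measure lborel (cbox a b)"
      unfolding measure_def using shear_emeasure[OF \<open>m \<noteq> n\<close>, of "cbox a b"] by simp
    also have "\<dots> = measure lebesgue (cbox a b)" by simp
    finally show ?thesis by simp
  qed
  show "\<exists>c\<ge>0. \<forall>S\<in>lmeasurable. ?h ` S \<in> lmeasurable \<and> measure lebesgue (?h ` S) = c * measure lebesgue S"
  proof (intro exI[of _ 1] conjI ballI)
    fix S :: "(real^'n) set" assume S: "S \<in> lmeasurable"
    note ms = measure_linear_sufficient[OF lin S meq]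
    from ms show "?h ` S \<in> lmeasurable" by (rule conjunct1)
    from ms show "measure lebesgue (?h ` S) = 1 * measure lebesgue S" by linarith
  qed simp
qed


lemma linear_measure_lborel:
  fixes f :: "real^'n \<Rightarrow> real^'n"
  assumes lin: "linear f"
  obtains c where "c \<ge> 0" "\<And>S. compact S \<Longrightarrow> measure lborel (f ` S) = c * measure lborel S"
proof -
  obtain c where c: "c \<ge> 0" "\<forall>S\<in>lmeasurable. f ` S \<in> lmeasurable \<and> measure lebesgue (f ` S) = c * measure lebesgue S"
    using linear_measure_const[OF lin] by blast
  have "measure lborel (f ` S) = c * measure lborel S" if S: "compact S" for S
  proof -
    have fS: "compact (f ` S)"
      using lin S by (intro compact_continuous_image linear_continuous_on linear_conv_bounded_linear[THEN iffD1])
    have "measure lborel (f ` S) = measure lebesgue (f ` S)" using fS by (simp add: borel_compact)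
    also have "\<dots> = c * measure lebesgue S" using c(2) lmeasurable_compact[OF S] by blast
    also have "\<dots> = c * measure lborel S" using S by (simp add: borel_compact)
    finally show ?thesis .
  qed
  with c(1) show ?thesis using that by blast
qed

lemma ill_convex:
  fixes K :: "(real^'n) set"
  assumes K: "compact K" "convex K"
  shows "convex_on UNIV (\<lambda>x. measure lborel (convex hull (insert x K)))"
proof (rule convex_onI)
  fix t :: real and x y :: "real^'n" assume t: "0 < t" "t < 1"
  define d where "d = y - x"
  show "measure lborel (convex hull (insert ((1 - t) *\<^sub>R x + t *\<^sub>R y) K))
        \<le> (1 - t) * measure lborel (convex hull (insert x K)) + t * measure lborel (convex hull (insert y K))"
  proof (cases "d = 0")
    case True
    then have "y = x" by (simp add: d_def)
    moreover have "(1 - t) *\<^sub>R x + t *\<^sub>R x = x" by (simp add: scaleR_left_distrib[symmetric])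
    ultimately show ?thesis by (simp add: algebra_simps)
  next
    case False
    then obtain b where b: "b \<in> Basis" "d \<bullet> b \<noteq> 0"
      by (metis euclidean_all_zero_iff)
    have bb: "b \<bullet> b = 1" using b(1) by simp
    define T where "T = (\<lambda>q::real^'n. q + (q \<bullet> b) *\<^sub>R (d - b))"
    define Ti where "Ti = (\<lambda>q::real^'n. q - ((q \<bullet> b) / (d \<bullet> b)) *\<^sub>R (d - b))"
    have linT: "linear T" unfolding T_def
      by (rule linearI) (auto simp: inner_add_left algebra_simps)
    have linTi: "linear Ti" unfolding Ti_def
      by (rule linearI) (auto simp: inner_add_left algebra_simps add_divide_distrib)
    have Tib: "Ti q \<bullet> b = (q \<bullet> b) / (d \<bullet> b)" for q
    proof -
      have "Ti q \<bullet> b = q \<bullet> b - ((q \<bullet> b) / (d \<bullet> b)) * (d \<bullet> b - b \<bullet> b)"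
        by (simp add: Ti_def inner_diff_left)
      also have "\<dots> = (q \<bullet> b) / (d \<bullet> b)" using b(2) bb by (simp add: field_simps)
      finally show ?thesis .
    qed
    have TTi: "T (Ti q) = q" for q
      unfolding T_def Tib by (simp add: Ti_def)
    have Tb: "T b = d" using bb by (simp add: T_def)
    define K' where "K' = Ti ` K"
    have K'c: "compact K'" unfolding K'_def
      using linTi K(1) by (intro compact_continuous_image linear_continuous_on linear_conv_bounded_linear[THEN iffD1])
    have K'v: "convex K'" unfolding K'_def using linTi K(2) by (rule convex_linear_image)
    have TK': "T ` K' = K" unfolding K'_def by (simp add: image_comp TTi)
    define p where "p = Ti x"
    have Tp: "T p = x" by (simp add: p_def TTi)
    have hull_eq: "convex hull (insert (x + \<tau> *\<^sub>R d) K) = T ` (convex hull (insert (p + \<tau> *\<^sub>R b) K'))" for \<tau>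
    proof -
      have "T (p + \<tau> *\<^sub>R b) = x + \<tau> *\<^sub>R d"
        using linT Tp Tb by (simp add: linear_add linear_scale)
      then show ?thesis using TK' by (simp add: convex_hull_linear_image[OF linT])
    qed
    obtain c where c: "c \<ge> 0" "\<And>S. compact S \<Longrightarrow> measure lborel (T ` S) = c * measure lborel S"
      using linear_measure_lborel[OF linT] by blast
    let ?G = "\<lambda>\<tau>. measure lborel (convex hull (insert (p + \<tau> *\<^sub>R b) K'))"
    have Gc: "compact (convex hull (insert (p + \<tau> *\<^sub>R b) K'))" for \<tau>
      using K'c by (intro compact_convex_hull) auto
    have f_eq: "measure lborel (convex hull (insert (x + \<tau> *\<^sub>R d) K)) = c * ?G \<tau>" for \<tau>
      unfolding hull_eq by (rule c(2)[OF Gc])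
    have e0: "x = x + 0 *\<^sub>R d" by simp
    have e1: "y = x + 1 *\<^sub>R d" by (simp add: d_def)
    have et: "(1 - t) *\<^sub>R x + t *\<^sub>R y = x + ((1 - t) * 0 + t * 1) *\<^sub>R d" by (simp add: d_def algebra_simps)
    have "?G ((1 - t) * 0 + t * 1) \<le> (1 - t) * ?G 0 + t * ?G 1"
      using ill_convex_basis[OF K'c K'v b(1), of t p 0 1] t by simp
    then have "c * ?G ((1 - t) * 0 + t * 1) \<le> c * ((1 - t) * ?G 0 + t * ?G 1)"
      by (rule mult_left_mono[OF _ c(1)])
    moreover have "measure lborel (convex hull (insert ((1 - t) *\<^sub>R x + t *\<^sub>R y) K)) = c * ?G ((1 - t) * 0 + t * 1)"
      unfolding et by (rule f_eq)
    moreover have "measure lborel (convex hull (insert x K)) = c * ?G 0"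
      using f_eq[of 0] by simp
    moreover have "measure lborel (convex hull (insert y K)) = c * ?G 1"
      using f_eq[of 1] by (simp add: d_def)
    ultimately show ?thesis by (simp add: algebra_simps)
  qed
qed simp

lemma Ill_eq: "Ill x K = measure lborel (convex hull (insert x K))"
  by (simp add: Ill_def)

locale dpa = dp P for P :: "(real^'n) measure" +
  fixes \<alpha> :: real
  assumes alpha_pos: "0 < \<alpha>" and alpha_lt: "\<alpha> < maxdepth P"
    and vol_pos: "measure lborel (central_region P \<alpha>) > 0"
begin

abbreviation "K \<equiv> central_region P \<alpha>"
abbreviation "V \<equiv> measure lborel K"

lemma Kc: "compact K" using compact_central alpha_pos by blast
lemma Kv: "convex K" by (rule convex_central)

lemma K_interior: "\<exists>c r. r > 0 \<and> cball c r \<subseteq> K"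
proof -
  have "interior K \<noteq> {}"
  proof
    assume "interior K = {}"
    then have "negligible K" using negligible_convex_interior[OF Kv] by simp
    then have "K \<in> null_sets lebesgue" by (simp add: negligible_iff_null_sets)
    then have "K \<in> null_sets lborel"
      using null_sets_completion_iff[of K lborel] Kc by (simp add: borel_compact)
    then have "V = 0" by (simp add: measure_eq_0_null_sets)
    then show False using vol_pos by simp
  qed
  then obtain c where "c \<in> interior K" by blast
  then obtain e where "e > 0" "ball c e \<subseteq> K" using mem_interior by blast
  then show ?thesis by (intro exI[of _ c] exI[of _ "e/2"]) auto
qed

lemma alpha_half: "\<alpha> \<le> 1/2"
proof -
  obtain c r where cr: "r > 0" "cball c r \<subseteq> K" using K_interior by blast
  obtain b :: "real^'n" where b: "b \<in> Basis" using nonempty_Basis by blast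
  let ?c' = "c + r *\<^sub>R b"
  have "c \<in> K" "?c' \<in> K" using cr b by (auto simp: dist_norm)
  then have h: "\<alpha> \<le> HD c P" "\<alpha> \<le> HD ?c' P" by (auto simp: central_region_def)
  let ?A = "{y. b \<bullet> y \<le> b \<bullet> c}" and ?B = "{y. (-b) \<bullet> y \<le> (-b) \<bullet> ?c'}"
  have bb: "b \<bullet> b = 1" using b by simp
  have disj: "?A \<inter> ?B = {}"
    using cr(1) bb by (auto simp: inner_add_right)
  have "measure P ?A + measure P ?B = measure P (?A \<union> ?B)"
    using disj by (intro finite_measure_Union[symmetric]) auto
  also have "\<dots> \<le> 1" by simp
  finally have "measure P ?A + measure P ?B \<le> 1" .
  moreover have "\<alpha> \<le> measure P ?A" using h(1) HD_le[of c b] by linarith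
  moreover have "\<alpha> \<le> measure P ?B" using h(2) HD_le[of ?c' "-b"] by linarith
  ultimately show ?thesis by linarith
qed

lemma Ill_in: "x \<in> K \<Longrightarrow> Ill x K = V"
  using Kv by (simp add: Ill_eq insert_absorb convex_hull_eq[THEN iffD2])

lemma hullc: "compact (convex hull (insert x K))"
  using Kc by (intro compact_convex_hull) auto

lemma Ill_mono:
  assumes "x \<in> convex hull (insert y K)"
  shows "Ill x K \<le> Ill y K"
proof -
  have "convex hull (insert x K) \<subseteq> convex hull (insert y K)"
    using assms by (intro hull_minimal) (auto intro: hull_inc)
  then show ?thesis unfolding Ill_eq
    by (intro measure_mono_fmeasurable) (auto intro: fmeasurable_compact hullc borel_compact)
qed

lemma part_ii: "halfspace_symmetric P x \<longleftrightarrow> (\<exists>c\<ge>1/2. ID \<alpha> x P = (c, 1))"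
proof
  assume hs: "halfspace_symmetric P x"
  have "1/2 \<le> HD x P" unfolding HD_ge_iff
  proof
    fix u :: "real^'n"
    show "1/2 \<le> measure P {y. u \<bullet> y \<le> u \<bullet> x}"
    proof (cases "u = 0")
      case True then show ?thesis using prob_space by simp
    next
      case False then show ?thesis using hs by (auto simp: halfspace_symmetric_def)
    qed
  qed
  then have "x \<in> K" using alpha_half by (simp add: central_region_def)
  then have "Ill x K / V = 1" using vol_pos by (simp add: Ill_in)
  then show "\<exists>c\<ge>1/2. ID \<alpha> x P = (c, 1)"
    using \<open>1/2 \<le> HD x P\<close> by (auto simp: ID_def)
next
  assume "\<exists>c\<ge>1/2. ID \<alpha> x P = (c, 1)"
  then have h: "1/2 \<le> HD x P" by (auto simp: ID_def)
  show "halfspace_symmetric P x" unfolding halfspace_symmetric_def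
  proof (intro allI impI)
    fix u :: "real^'n" and c assume "u \<noteq> 0" "u \<bullet> x \<le> c"
    then have "measure P {y. u \<bullet> y \<le> u \<bullet> x} \<le> measure P {y. u \<bullet> y \<le> c}"
      by (intro finite_measure_mono) auto
    then show "1/2 \<le> measure P {y. u \<bullet> y \<le> c}" using h HD_le[of x u] by linarith
  qed
qed

lemma part_iii:
  assumes x: "HD x P = maxdepth P" and st: "0 \<le> s" "s \<le> t"
  shows "fst (ID \<alpha> (x + t *\<^sub>R u) P) \<le> fst (ID \<alpha> (x + s *\<^sub>R u) P) \<and>
         snd (ID \<alpha> (x + s *\<^sub>R u) P) \<le> snd (ID \<alpha> (x + t *\<^sub>R u) P)"
proof (cases "t = 0")
  case True then have "s = 0" using st by simp
  with True show ?thesis by simp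
next
  case False
  then have t: "t > 0" using st by simp
  define w where "w = s / t"
  have w: "0 \<le> w" "w \<le> 1" using st t by (auto simp: w_def)
  have eq: "x + s *\<^sub>R u = (1 - w) *\<^sub>R x + w *\<^sub>R (x + t *\<^sub>R u)"
    using t by (simp add: w_def algebra_simps)
  have "min (HD x P) (HD (x + t *\<^sub>R u) P) \<le> HD (x + s *\<^sub>R u) P"
    unfolding eq by (rule HD_segment[OF w])
  moreover have "HD (x + t *\<^sub>R u) P \<le> HD x P" using x HD_le_maxdepth by simp
  ultimately have 1: "HD (x + t *\<^sub>R u) P \<le> HD (x + s *\<^sub>R u) P" by simp
  have "x \<in> K" using x alpha_lt by (simp add: central_region_def)
  then have "x + s *\<^sub>R u \<in> convex hull (insert (x + t *\<^sub>R u) K)"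
    unfolding eq using w
    by (intro convexD_alt[OF convex_convex_hull]) (auto intro: hull_inc)
  then have "Ill (x + s *\<^sub>R u) K \<le> Ill (x + t *\<^sub>R u) K" by (rule Ill_mono)
  then have 2: "Ill (x + s *\<^sub>R u) K / V \<le> Ill (x + t *\<^sub>R u) K / V"
    using vol_pos by (simp add: divide_right_mono)
  show ?thesis using 1 2 by (simp add: ID_def)
qed

lemma Ill_convex: "convex_on UNIV (\<lambda>x. Ill x K)"
  unfolding Ill_eq by (rule ill_convex[OF Kc Kv])

lemma Ill_cont: "continuous_on UNIV (\<lambda>x. Ill x K)"
  by (rule convex_on_continuous[OF open_UNIV Ill_convex])

lemma snd_cont: "continuous_on UNIV (\<lambda>x. snd (ID \<alpha> x P))"
  unfolding ID_def snd_conv using vol_pos by (intro continuous_intros Ill_cont) auto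

lemma part_iv:
  "convex {x. fst (ID \<alpha> x P) \<ge> c1 \<and> snd (ID \<alpha> x P) \<le> c2} \<and>
   (c1 > 0 \<longrightarrow> compact {x. fst (ID \<alpha> x P) \<ge> c1 \<and> snd (ID \<alpha> x P) \<le> c2})"
proof -
  have eq: "{x. fst (ID \<alpha> x P) \<ge> c1 \<and> snd (ID \<alpha> x P) \<le> c2} =
      central_region P c1 \<inter> {x. snd (ID \<alpha> x P) \<le> c2}"
    by (auto simp: ID_def central_region_def)
  have cv: "convex {x. snd (ID \<alpha> x P) \<le> c2}"
    unfolding convex_alt
  proof (intro ballI allI impI)
    fix x y and u :: real assume xy: "x \<in> {x. snd (ID \<alpha> x P) \<le> c2}" "y \<in> {x. snd (ID \<alpha> x P) \<le> c2}"
      and u: "0 \<le> u \<and> u \<le> 1"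
    have "Ill ((1 - u) *\<^sub>R x + u *\<^sub>R y) K \<le> (1 - u) * Ill x K + u * Ill y K"
      using convex_onD[OF Ill_convex, of u x y] u by auto
    then have "Ill ((1 - u) *\<^sub>R x + u *\<^sub>R y) K / V \<le> ((1 - u) * Ill x K + u * Ill y K) / V"
      using vol_pos by (simp add: divide_right_mono)
    also have "\<dots> = (1 - u) * (Ill x K / V) + u * (Ill y K / V)" using vol_pos by (simp add: field_simps)
    also have "\<dots> \<le> (1 - u) * c2 + u * c2"
      using xy u by (intro add_mono mult_left_mono) (auto simp: ID_def)
    also have "\<dots> = c2" by (simp add: algebra_simps)
    finally show "(1 - u) *\<^sub>R x + u *\<^sub>R y \<in> {x. snd (ID \<alpha> x P) \<le> c2}" by (simp add: ID_def)
  qed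
  have cl: "closed {x. snd (ID \<alpha> x P) \<le> c2}"
    using snd_cont by (intro closed_Collect_le) (auto intro: continuous_intros)
  show ?thesis unfolding eq
    using convex_Int[OF convex_central cv] compact_Int_closed[OF compact_central cl] by auto
qed

end

context dpa begin

lemma fst_ID: "fst (ID \<alpha> x P) = HD x P" by (simp add: ID_def)
lemma snd_ID: "snd (ID \<alpha> x P) = Ill x K / V" by (simp add: ID_def)

lemma far_point: "\<exists>x::real^'n. r \<le> norm x"
proof -
  obtain b :: "real^'n" where b: "b \<in> Basis" using nonempty_Basis by blast
  show ?thesis by (intro exI[of _ "\<bar>r\<bar> *\<^sub>R b"]) (use b in simp)
qed

lemma far_set: "{x::real^'n. r \<le> norm x} \<noteq> {}"
proof -
  obtain b :: "real^'n" where b: "b \<in> Basis" using nonempty_Basis by blast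
  then have "\<bar>r\<bar> *\<^sub>R b \<in> {x::real^'n. r \<le> norm x}" by simp
  then show ?thesis by blast
qed

lemma part_vi1: "((\<lambda>r. SUP x\<in>{x. norm x \<ge> r}. fst (ID \<alpha> x P)) \<longlongrightarrow> 0) at_top"
  unfolding fst_ID
proof (rule order_tendstoI)
  fix a :: real assume a: "a < 0"
  show "eventually (\<lambda>r. a < (SUP x\<in>{x. norm x \<ge> r}. HD x P)) at_top"
  proof (rule always_eventually, rule allI)
    fix r :: real
    obtain x0 :: "real^'n" where x0: "r \<le> norm x0" using far_point by blast
    have "HD x0 P \<le> (SUP x\<in>{x. norm x \<ge> r}. HD x P)"
      using x0 by (intro cSUP_upper bdd_above_HD) auto
    then show "a < (SUP x\<in>{x. norm x \<ge> r}. HD x P)" using HD_nonneg[of x0] a by linarith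
  qed
next
  fix a :: real assume a: "0 < a"
  obtain R where R: "\<forall>r\<ge>R. measure P {y. r \<le> norm y} < a" using tail[OF a] by blast
  show "eventually (\<lambda>r. (SUP x\<in>{x. norm x \<ge> r}. HD x P) < a) at_top"
    unfolding eventually_at_top_linorder
  proof (intro exI[of _ R] allI impI)
    fix r assume r: "r \<ge> R"
    have "(SUP x\<in>{x. norm x \<ge> r}. HD x P) \<le> measure P {y. r \<le> norm y}"
    proof (rule cSUP_least)
      show "{x::real^'n. norm x \<ge> r} \<noteq> {}" by (rule far_set)
      fix x :: "real^'n" assume "x \<in> {x. norm x \<ge> r}"
      then have "measure P {y. norm x \<le> norm y} \<le> measure P {y. r \<le> norm y}"
        by (intro finite_measure_mono closed_sets closed_Collect_le continuous_intros) auto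
      then show "HD x P \<le> measure P {y. r \<le> norm y}" using HD_far[of x] by linarith
    qed
    then show "(SUP x\<in>{x. norm x \<ge> r}. HD x P) < a" using R r by fastforce
  qed
qed

lemma growth: "\<exists>c R m. R > 0 \<and> m > 0 \<and> (\<forall>x. dist c x \<ge> 4 * R \<longrightarrow> Ill x K \<ge> V + m * dist c x / (4 * R))"
proof -
  obtain c \<rho> where cr: "\<rho> > 0" "cball c \<rho> \<subseteq> K" using K_interior by blast
  obtain R0 where R0: "K \<subseteq> cball c R0"
    using bounded_subset_cball Kc compact_imp_bounded by (metis bounded_subset_ballD ball_subset_cball order_trans)
  define R where "R = max R0 \<rho>"
  have Rpos: "R > 0" using cr by (simp add: R_def)
  have KR: "K \<subseteq> cball c R" using R0 by (auto simp: R_def)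
  have rhoR: "\<rho> \<le> R" by (simp add: R_def)
  define m where "m = measure lborel (cball (0::real^'n) (\<rho>/8))"
  have mpos: "m > 0" unfolding m_def using cr(1) by (intro content_cball_pos) simp
  have cK: "c \<in> K" using cr by auto
  have A: "V + m \<le> Ill x0 K" if x0: "dist c x0 = 4 * R" for x0
  proof -
    define q where "q = (3/4) *\<^sub>R x0 + (1/4) *\<^sub>R c"
    let ?B = "cball q (\<rho>/8)"
    let ?H = "convex hull (insert x0 K)"
    have BH: "?B \<subseteq> ?H"
    proof
      fix z assume z: "z \<in> ?B"
      define k where "k = c + 4 *\<^sub>R (z - q)"
      have "dist c k \<le> \<rho>" using z cr(1) by (simp add: k_def dist_norm norm_minus_commute)
      then have k: "k \<in> K" using cr by auto
      have "z = (1 - 1/4) *\<^sub>R x0 + (1/4) *\<^sub>R k" by (simp add: k_def q_def algebra_simps)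
      also have "\<dots> \<in> ?H" using k by (intro convexD_alt[OF convex_convex_hull]) (auto intro: hull_inc)
      finally show "z \<in> ?H" .
    qed
    have BK: "?B \<inter> K = {}"
    proof (rule ccontr)
      assume "?B \<inter> K \<noteq> {}"
      then obtain z where z: "z \<in> ?B" "z \<in> K" by blast
      have "dist c q = 3 * R"
      proof -
        have "c - q = (3/4) *\<^sub>R (c - x0)" by (simp add: q_def vec_eq_iff algebra_simps)
        then show ?thesis using x0 by (simp add: dist_norm)
      qed
      moreover have "dist c q \<le> dist c z + dist z q" by (rule dist_triangle)
      moreover have "dist z q \<le> \<rho>/8" using z by (simp add: dist_commute)
      moreover have "dist c z \<le> R" using z KR by auto
      ultimately show False using rhoR Rpos by linarith
    qed
    have "V + m = measure lborel (K \<union> ?B)"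
    proof -
      have "measure lborel (K \<union> ?B) = V + measure lborel (?B - K)"
        using Kc by (intro measure_Un2 fmeasurable_compact) auto
      also have "?B - K = ?B" using BK by auto
      also have "measure lborel ?B = m" unfolding m_def using cr(1) by (simp add: content_cball)
      finally show ?thesis by simp
    qed
    also have "\<dots> \<le> measure lborel ?H"
    proof -
      have sub: "K \<union> ?B \<subseteq> ?H" using BH by (auto intro: hull_inc)
      have "K \<union> ?B \<in> sets borel" by (rule sets.Un[OF borel_compact[OF Kc] borel_compact[OF compact_cball]])
      then have "K \<union> ?B \<in> sets lborel" by simp
      from measure_mono_fmeasurable[OF sub this fmeasurable_compact[OF hullc]] show ?thesis .
    qed
    finally show ?thesis by (simp add: Ill_eq)
  qed
  have "Ill x K \<ge> V + m * dist c x / (4 * R)" if x: "dist c x \<ge> 4 * R" for x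
  proof -
    define s where "s = dist c x"
    have spos: "s > 0" unfolding s_def using x Rpos by linarith
    define th where "th = 4 * R / s"
    have th: "0 < th" "th \<le> 1" using spos Rpos x by (auto simp: th_def s_def)
    define x0 where "x0 = (1 - th) *\<^sub>R c + th *\<^sub>R x"
    have "c - x0 = th *\<^sub>R (c - x)" by (simp add: x0_def algebra_simps)
    then have "dist c x0 = th * s" using th by (simp add: dist_norm s_def)
    also have "\<dots> = 4 * R" using spos by (simp add: th_def)
    finally have "V + m \<le> Ill x0 K" by (rule A)
    also have "Ill x0 K \<le> (1 - th) * Ill c K + th * Ill x K"
      unfolding x0_def using th by (intro convex_onD[OF Ill_convex]) auto
    also have "Ill c K = V" using cK by (rule Ill_in)
    finally have "m \<le> th * (Ill x K - V)" by (simp add: algebra_simps)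
    then have "m / th \<le> Ill x K - V" using th by (simp add: field_simps)
    moreover have "m / th = m * dist c x / (4 * R)" using spos Rpos by (simp add: th_def s_def field_simps)
    ultimately show ?thesis by simp
  qed
  note main = this
  show ?thesis
    by (rule exI[of _ c], rule exI[of _ R], rule exI[of _ m]) (intro conjI Rpos mpos allI impI main)
qed

lemma part_vi2: "filterlim (\<lambda>r. INF x\<in>{x. norm x \<ge> r}. snd (ID \<alpha> x P)) at_top at_top"
  unfolding snd_ID filterlim_at_top
proof
  fix Z :: real
  obtain c R m where cRm: "R > 0" "m > 0" "\<And>x. dist c x \<ge> 4 * R \<Longrightarrow> Ill x K \<ge> V + m * dist c x / (4 * R)"
    using growth by blast
  define r0 where "r0 = norm c + 4 * R + \<bar>Z\<bar> * V * 4 * R / m"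
  show "eventually (\<lambda>r. Z \<le> (INF x\<in>{x. norm x \<ge> r}. Ill x K / V)) at_top"
    unfolding eventually_at_top_linorder
  proof (intro exI[of _ r0] allI impI)
    fix r assume r: "r \<ge> r0"
    show "Z \<le> (INF x\<in>{x. norm x \<ge> r}. Ill x K / V)"
    proof (rule cINF_greatest)
      show "{x::real^'n. norm x \<ge> r} \<noteq> {}" by (rule far_set)
      fix x :: "real^'n" assume "x \<in> {x. norm x \<ge> r}"
      then have nx: "norm x \<ge> r" by simp
      have d: "dist c x \<ge> norm x - norm c"
        using norm_triangle_ineq2[of x c] dist_norm[of x c] dist_commute[of c x] by linarith
      have "\<bar>Z\<bar> * V * 4 * R / m \<ge> 0" using cRm(1,2) vol_pos by simp
      then have d2: "dist c x \<ge> 4 * R" and d3: "dist c x \<ge> \<bar>Z\<bar> * V * 4 * R / m"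
        using d nx r cRm(1) unfolding r0_def by linarith+
      have "Ill x K \<ge> V + m * dist c x / (4 * R)" using cRm(3)[OF d2] .
      moreover have "m * dist c x / (4 * R) \<ge> \<bar>Z\<bar> * V"
      proof -
        have "m * (\<bar>Z\<bar> * V * 4 * R / m) \<le> m * dist c x" using d3 cRm(2) by (intro mult_left_mono) auto
        then have "\<bar>Z\<bar> * V * 4 * R \<le> m * dist c x" using cRm(2) by simp
        then show ?thesis using cRm(1) by (simp add: field_simps)
      qed
      ultimately have "Ill x K \<ge> \<bar>Z\<bar> * V" using vol_pos by linarith
      then have "Ill x K / V \<ge> \<bar>Z\<bar>" using vol_pos by (simp add: field_simps)
      then show "Z \<le> Ill x K / V" by linarith
    qed
  qed
qed

end

lemma aff_measure:
  fixes A :: "real^'n^'n" and b :: "real^'n"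
  assumes inv: "invertible A"
  shows "\<exists>c>0. \<forall>S. compact S \<longrightarrow> measure lborel ((\<lambda>y. A *v y + b) ` S) = c * measure lborel S"
proof -
  obtain A' where A': "A ** A' = mat 1" "A' ** A = mat 1" using inv unfolding invertible_def by blast
  have linA: "linear ((*v) A)" by (rule matrix_vector_mul_linear)
  have linA': "linear ((*v) A')" by (rule matrix_vector_mul_linear)
  obtain c where c: "c \<ge> 0" "\<And>S. compact S \<Longrightarrow> measure lborel ((*v) A ` S) = c * measure lborel S"
    using linear_measure_lborel[OF linA] by blast
  obtain c' where c': "c' \<ge> 0" "\<And>S. compact S \<Longrightarrow> measure lborel ((*v) A' ` S) = c' * measure lborel S"
    using linear_measure_lborel[OF linA'] by blast
  have cpt: "compact ((*v) M ` S)" if "compact S" for S and M :: "real^'n^'n"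
    using that matrix_vector_mul_linear[of M]
    by (intro compact_continuous_image linear_continuous_on linear_conv_bounded_linear[THEN iffD1])
  have "c \<noteq> 0"
  proof
    assume "c = 0"
    let ?S = "cball (0::real^'n) 1"
    have "(*v) A' ` (*v) A ` ?S = ?S"
      by (simp add: image_comp o_def matrix_vector_mul_assoc A'(2))
    then have "measure lborel ?S = measure lborel ((*v) A' ` (*v) A ` ?S)" by simp
    also have "\<dots> = c' * measure lborel ((*v) A ` ?S)"
      by (rule c'(2)[OF cpt[OF compact_cball]])
    also have "\<dots> = 0" using c(2)[OF compact_cball] \<open>c = 0\<close> by simp
    finally show False using content_cball_pos[of 1 "0::real^'n"] by simp
  qed
  have "measure lborel ((\<lambda>y. A *v y + b) ` S) = c * measure lborel S" if S: "compact S" for S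
  proof -
    have eq: "(\<lambda>y. A *v y + b) ` S = (+) b ` ((*v) A ` S)" by (auto simp: image_image add.commute)
    have AS: "compact ((*v) A ` S)" by (rule cpt[OF S])
    have bAS: "compact ((+) b ` ((*v) A ` S))" using AS by (rule compact_translation)
    have "measure lborel ((+) b ` ((*v) A ` S)) = measure lebesgue ((+) b ` ((*v) A ` S))"
      using bAS by (simp add: borel_compact)
    also have "\<dots> = measure lebesgue ((*v) A ` S)" by (rule measure_translation)
    also have "\<dots> = measure lborel ((*v) A ` S)" using AS by (simp add: borel_compact)
    finally show ?thesis unfolding eq using c(2)[OF S] by simp
  qed
  then show ?thesis using c(1) \<open>c \<noteq> 0\<close> by (intro exI[of _ c]) auto
qed

context dp begin

lemma HD_affine:
  fixes A :: "real^'n^'n" and b :: "real^'n"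
  assumes inv: "invertible A"
  shows "HD (A *v x + b) (distr P borel (\<lambda>y. A *v y + b)) = HD x P"
proof -
  let ?f = "\<lambda>y. A *v y + b"
  let ?Q = "distr P borel ?f"
  obtain A' where A': "A ** A' = mat 1" "A' ** A = mat 1" using inv unfolding invertible_def by blast
  have fc: "continuous_on UNIV ?f"
    using matrix_vector_mul_linear[of A]
    by (intro continuous_intros linear_continuous_on linear_conv_bounded_linear[THEN iffD1])
  have fm: "?f \<in> measurable P borel"
    using borel_measurable_continuous_onI[OF fc] by (simp add: measurable_cong_sets[OF sets_P refl])
  have m: "measure ?Q {y. u \<bullet> y \<le> u \<bullet> (A *v x + b)} = measure P {y. (u v* A) \<bullet> y \<le> (u v* A) \<bullet> x}" for u
  proof -
    have "measure ?Q {y. u \<bullet> y \<le> u \<bullet> (A *v x + b)} = measure P (?f -` {y. u \<bullet> y \<le> u \<bullet> (A *v x + b)} \<inter> space P)"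
      using fm by (intro measure_distr) auto
    also have "?f -` {y. u \<bullet> y \<le> u \<bullet> (A *v x + b)} \<inter> space P = {y. (u v* A) \<bullet> y \<le> (u v* A) \<bullet> x}"
      by (auto simp: dot_lmul_matrix inner_add_right)
    finally show ?thesis .
  qed
  have surj: "range (\<lambda>u. u v* A) = UNIV"
  proof (intro set_eqI iffI)
    fix v :: "real^'n"
    have "v = (v v* A') v* A" by (simp add: vector_matrix_mul_assoc A'(2))
    then show "v \<in> range (\<lambda>u. u v* A)" by blast
  qed auto
  have "HD (A *v x + b) ?Q = (INF u. measure P {y. (u v* A) \<bullet> y \<le> (u v* A) \<bullet> x})"
    unfolding HD_def m ..
  also have "\<dots> = (INF v\<in>range (\<lambda>u. u v* A). measure P {y. v \<bullet> y \<le> v \<bullet> x})"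
    by (simp add: image_comp o_def)
  also have "\<dots> = HD x P" unfolding surj HD_def ..
  finally show ?thesis .
qed

end

context dpa begin

lemma part_i:
  fixes A :: "real^'n^'n" and b :: "real^'n"
  assumes inv: "invertible A"
  shows "ID \<alpha> (A *v x + b) (distr P borel (\<lambda>y. A *v y + b)) = ID \<alpha> x P"
proof -
  let ?f = "\<lambda>y. A *v y + b"
  let ?Q = "distr P borel ?f"
  obtain A' where A': "A ** A' = mat 1" "A' ** A = mat 1" using inv unfolding invertible_def by blast
  have finv: "?f (A' *v (z - b)) = z" for z by (simp add: matrix_vector_mul_assoc A'(1))
  have CR: "central_region ?Q \<alpha> = ?f ` K"
  proof (intro set_eqI iffI)
    fix z assume "z \<in> central_region ?Q \<alpha>"
    then have "\<alpha> \<le> HD (?f (A' *v (z - b))) ?Q" by (simp add: finv central_region_def)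
    then have "A' *v (z - b) \<in> K" by (simp only: HD_affine[OF inv]) (simp add: central_region_def)
    then show "z \<in> ?f ` K" using finv by (metis image_eqI)
  next
    fix z assume "z \<in> ?f ` K"
    then obtain y where y: "y \<in> K" "z = ?f y" by blast
    then show "z \<in> central_region ?Q \<alpha>" by (simp add: central_region_def HD_affine[OF inv])
  qed
  obtain c where c: "c > 0" "\<And>S. compact S \<Longrightarrow> measure lborel (?f ` S) = c * measure lborel S"
    using aff_measure[OF inv, of b] by blast
  have hull: "convex hull (insert (?f x) (?f ` K)) = ?f ` (convex hull (insert x K))"
  proof -
    have "?f ` (convex hull (insert x K)) = (+) b ` ((*v) A ` (convex hull (insert x K)))"
      by (auto simp: image_image add.commute)
    also have "\<dots> = (+) b ` (convex hull ((*v) A ` insert x K))"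
      by (simp add: convex_hull_linear_image[OF matrix_vector_mul_linear])
    also have "\<dots> = convex hull ((+) b ` (*v) A ` insert x K)"
      by (rule convex_hull_translation[symmetric])
    also have "(+) b ` (*v) A ` insert x K = insert (?f x) (?f ` K)"
      by (auto simp: image_image add.commute)
    finally show ?thesis ..
  qed
  have Ill: "Ill (?f x) (?f ` K) = c * Ill x K"
    unfolding Ill_eq hull by (rule c(2)[OF hullc])
  have Vq: "measure lborel (?f ` K) = c * V" by (rule c(2)[OF Kc])
  show ?thesis
    unfolding ID_def CR Ill Vq HD_affine[OF inv] using c(1) by simp
qed

end

context dp begin

lemma hyper_null:
  assumes dens: "P = density lborel f" and fm: "f \<in> borel_measurable lborel" and u: "u \<noteq> 0"
  shows "{y. u \<bullet> y = a} \<in> null_sets P"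
proof -
  let ?H = "{y::real^'n. u \<bullet> y = a}"
  have Hb: "?H \<in> sets borel" by (intro borel_closed closed_hyperplane)
  have "negligible ?H" using u by (intro negligible_hyperplane) simp
  then have "?H \<in> null_sets lebesgue" by (simp add: negligible_iff_null_sets)
  then have Hn: "?H \<in> null_sets lborel" using null_sets_completion_iff[of ?H lborel] Hb by simp
  have "emeasure P ?H = (\<integral>\<^sup>+ x. f x * indicator ?H x \<partial>lborel)"
    unfolding dens using fm Hb by (intro emeasure_density) auto
  also have "\<dots> = 0"
    using Hn by (intro nn_integral_null_set[THEN trans]) (auto simp: nn_integral_cong_AE AE_iff_null_sets)
  finally show ?thesis using Hb by (auto simp: null_sets_def)
qed

lemma g_tendsto:
  assumes dens: "P = density lborel f" and fm: "f \<in> borel_measurable lborel" and u: "u \<noteq> 0"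
    and z: "z \<longlonglongrightarrow> (u, x)"
  shows "(\<lambda>k. measure P {y. fst (z k) \<bullet> y \<le> fst (z k) \<bullet> snd (z k)}) \<longlonglongrightarrow> measure P {y. u \<bullet> y \<le> u \<bullet> x}"
proof -
  have U: "(\<lambda>k. fst (z k)) \<longlonglongrightarrow> u" using tendsto_fst[OF z] by simp
  have X: "(\<lambda>k. snd (z k)) \<longlonglongrightarrow> x" using tendsto_snd[OF z] by simp
  let ?A = "\<lambda>k. {y. fst (z k) \<bullet> y \<le> fst (z k) \<bullet> snd (z k)}"
  let ?B = "{y. u \<bullet> y \<le> u \<bullet> x}"
  have lim: "(\<lambda>k. integral\<^sup>L P (indicator (?A k) :: _ \<Rightarrow> real)) \<longlonglongrightarrow> integral\<^sup>L P (indicator ?B)"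
  proof (rule integral_dominated_convergence[where w="\<lambda>_. 1"])
    show "indicator ?B \<in> borel_measurable P" by (intro borel_measurable_indicator hs_sets)
    show "indicator (?A k) \<in> borel_measurable P" for k by (intro borel_measurable_indicator hs_sets)
    show "integrable P (\<lambda>_. 1::real)" by simp
    show "AE y in P. norm (indicator (?A k) y :: real) \<le> 1" for k by (auto split: split_indicator)
    have "AE y in P. y \<notin> {y. u \<bullet> y = u \<bullet> x}" by (rule AE_not_in[OF hyper_null[OF dens fm u]])
    then show "AE y in P. (\<lambda>k. indicator (?A k) y :: real) \<longlonglongrightarrow> indicator ?B y"
    proof (rule eventually_mono)
      fix y assume "y \<notin> {y. u \<bullet> y = u \<bullet> x}"
      then have ne: "u \<bullet> y - u \<bullet> x \<noteq> 0" by simp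
      have D: "(\<lambda>k. fst (z k) \<bullet> y - fst (z k) \<bullet> snd (z k)) \<longlonglongrightarrow> u \<bullet> y - u \<bullet> x"
        by (intro tendsto_intros U X)
      show "(\<lambda>k. indicator (?A k) y :: real) \<longlonglongrightarrow> indicator ?B y"
      proof (cases "u \<bullet> y - u \<bullet> x < 0")
        case True
        then have "eventually (\<lambda>k. fst (z k) \<bullet> y - fst (z k) \<bullet> snd (z k) < 0) sequentially"
          using D by (rule order_tendstoD(2)[rotated])
        then have "eventually (\<lambda>k. (indicator (?A k) y :: real) = indicator ?B y) sequentially"
          by eventually_elim (use True in \<open>auto split: split_indicator\<close>)
        then show ?thesis by (rule tendsto_eventually)
      next
        case False
        then have pos: "u \<bullet> y - u \<bullet> x > 0" using ne by simp
        then have "eventually (\<lambda>k. fst (z k) \<bullet> y - fst (z k) \<bullet> snd (z k) > 0) sequentially"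
          using D by (rule order_tendstoD(1)[rotated])
        then have "eventually (\<lambda>k. (indicator (?A k) y :: real) = indicator ?B y) sequentially"
          by eventually_elim (use pos in \<open>auto split: split_indicator\<close>)
        then show ?thesis by (rule tendsto_eventually)
      qed
    qed
  qed
  then show ?thesis by simp
qed

lemma g_cont:
  assumes dens: "P = density lborel f" and fm: "f \<in> borel_measurable lborel"
  shows "continuous_on (sphere 0 1 \<times> UNIV) (\<lambda>z. measure P {y. fst z \<bullet> y \<le> fst z \<bullet> snd z})"
proof (rule continuous_on_sequentiallyI)
  fix z :: "nat \<Rightarrow> (real^'n) \<times> (real^'n)" and a
  assume "a \<in> sphere 0 1 \<times> UNIV" "z \<longlonglongrightarrow> a"
  moreover obtain u x where ux: "a = (u, x)" by (cases a)
  ultimately have a: "a = (u, x)" "u \<noteq> 0" "z \<longlonglongrightarrow> (u, x)" by auto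
  show "(\<lambda>n. measure P {y. fst (z n) \<bullet> y \<le> fst (z n) \<bullet> snd (z n)}) \<longlonglongrightarrow>
        measure P {y. fst a \<bullet> y \<le> fst a \<bullet> snd a}"
    using g_tendsto[OF dens fm a(2) a(3)] a(1) by simp
qed

lemma g_normalize:
  assumes "u \<noteq> 0"
  shows "{y. u \<bullet> y \<le> u \<bullet> x} = {y. (u /\<^sub>R norm u) \<bullet> y \<le> (u /\<^sub>R norm u) \<bullet> x}"
  using assms by (auto simp: divide_le_cancel)

lemma HD_cont:
  assumes dens: "P = density lborel f" and fm: "f \<in> borel_measurable lborel"
  shows "continuous_on UNIV (\<lambda>x. HD x P)"
  unfolding continuous_on_iff
proof (intro ballI allI impI)
  fix x0 :: "real^'n" and e :: real assume e: "e > 0"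
  let ?g = "\<lambda>z::(real^'n) \<times> (real^'n). measure P {y. fst z \<bullet> y \<le> fst z \<bullet> snd z}"
  let ?C = "sphere (0::real^'n) 1 \<times> cball x0 1"
  have "continuous_on ?C ?g" by (rule continuous_on_subset[OF g_cont[OF dens fm]]) auto
  moreover have "compact ?C" by (intro compact_Times compact_sphere compact_cball)
  ultimately have "uniformly_continuous_on ?C ?g" by (rule compact_uniformly_continuous)
  then obtain d where d: "d > 0" "\<And>z z'. z \<in> ?C \<Longrightarrow> z' \<in> ?C \<Longrightarrow> dist z' z < d \<Longrightarrow> dist (?g z') (?g z) < e/2"
    unfolding uniformly_continuous_on_def using e by (metis half_gt_zero)
  show "\<exists>d>0. \<forall>x'\<in>UNIV. dist x' x0 < d \<longrightarrow> dist (HD x' P) (HD x0 P) < e"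
  proof (intro exI[of _ "min d 1"] conjI ballI impI)
    show "min d 1 > 0" using d by simp
    fix x' :: "real^'n" assume x': "dist x' x0 < min d 1"
    have close: "\<bar>measure P {y. n \<bullet> y \<le> n \<bullet> x'} - measure P {y. n \<bullet> y \<le> n \<bullet> x0}\<bar> < e/2"
      if n: "norm n = 1" for n
    proof -
      have "(n, x') \<in> ?C" "(n, x0) \<in> ?C" using n x' by (auto simp: dist_commute)
      moreover have "dist (n, x') (n, x0) < d" using x' by (simp add: dist_Pair_Pair)
      ultimately have "dist (?g (n, x')) (?g (n, x0)) < e/2" by (intro d(2))
      then show ?thesis by (simp add: dist_real_def)
    qed
    have lo: "HD x0 P - e/2 \<le> HD x' P" unfolding HD_ge_iff
    proof
      fix u :: "real^'n"
      show "HD x0 P - e/2 \<le> measure P {y. u \<bullet> y \<le> u \<bullet> x'}"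
      proof (cases "u = 0")
        case True then show ?thesis using HD_le1[of x0] e prob_space by simp
      next
        case False
        let ?n = "u /\<^sub>R norm u"
        have nn: "norm ?n = 1" using False by simp
        have h: "HD x0 P \<le> measure P {y. ?n \<bullet> y \<le> ?n \<bullet> x0}" by (rule HD_le)
        have eq: "measure P {y. u \<bullet> y \<le> u \<bullet> x'} = measure P {y. ?n \<bullet> y \<le> ?n \<bullet> x'}"
          by (subst g_normalize[OF False]) (rule refl)
        show ?thesis using close[OF nn] h eq unfolding abs_less_iff by linarith
      qed
    qed
    have hi: "HD x' P < HD x0 P + e"
    proof -
      have "HD x0 P < HD x0 P + e/2" using e by simp
      then obtain u where u: "measure P {y. u \<bullet> y \<le> u \<bullet> x0} < HD x0 P + e/2"
        unfolding HD_less_iff by blast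
      show ?thesis
      proof (cases "u = 0")
        case True
        then have "1 < HD x0 P + e/2" using u prob_space by simp
        then show ?thesis using HD_le1[of x'] e by linarith
      next
        case False
        let ?n = "u /\<^sub>R norm u"
        have nn: "norm ?n = 1" using False by simp
        have h: "HD x' P \<le> measure P {y. ?n \<bullet> y \<le> ?n \<bullet> x'}" by (rule HD_le)
        have eq: "measure P {y. u \<bullet> y \<le> u \<bullet> x0} = measure P {y. ?n \<bullet> y \<le> ?n \<bullet> x0}"
          by (subst g_normalize[OF False]) (rule refl)
        show ?thesis using close[OF nn] u h eq unfolding abs_less_iff by linarith
      qed
    qed
    show "dist (HD x' P) (HD x0 P) < e" using lo hi e by (simp add: dist_real_def abs_less_iff)
  qed
qed

end

theorem theorem1:
  fixes P :: "(real^'n) measure" and \<alpha> :: real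
  assumes prob: "prob_space P"
    and borelP: "sets P = sets borel"
    and alpha_pos: "0 < \<alpha>" and alpha_lt: "\<alpha> < maxdepth P"
    and vol_pos: "measure lborel (central_region P \<alpha>) > 0"
  shows
    \<comment> \<open>(i) affine invariance\<close>
    "(\<forall>(A::real^'n^'n) b x. invertible A \<longrightarrow>
        ID \<alpha> (A *v x + b) (distr P borel (\<lambda>y. A *v y + b)) = ID \<alpha> x P)
   \<comment> \<open>(ii) characterisation of halfspace symmetry\<close>
   \<and> (\<forall>x. halfspace_symmetric P x \<longleftrightarrow> (\<exists>c\<ge>1/2. ID \<alpha> x P = (c, 1)))
   \<comment> \<open>(iii) monotonicity along rays from a deepest point\<close>
   \<and> (\<forall>x. HD x P = maxdepth P \<longrightarrow>
        (\<forall>u s t. 0 \<le> s \<longrightarrow> s \<le> t \<longrightarrow>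
           fst (ID \<alpha> (x + t *\<^sub>R u) P) \<le> fst (ID \<alpha> (x + s *\<^sub>R u) P) \<and>
           snd (ID \<alpha> (x + s *\<^sub>R u) P) \<le> snd (ID \<alpha> (x + t *\<^sub>R u) P)))
   \<comment> \<open>(iv) convexity and compactness of level sets\<close>
   \<and> (\<forall>c1 c2. convex {x. fst (ID \<alpha> x P) \<ge> c1 \<and> snd (ID \<alpha> x P) \<le> c2} \<and>
        (c1 > 0 \<longrightarrow> compact {x. fst (ID \<alpha> x P) \<ge> c1 \<and> snd (ID \<alpha> x P) \<le> c2}))
   \<comment> \<open>(v) semicontinuity / continuity\<close>
   \<and> upper_semicont (\<lambda>x. fst (ID \<alpha> x P))
   \<and> continuous_on UNIV (\<lambda>x. snd (ID \<alpha> x P))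
   \<and> ((\<exists>f. f \<in> borel_measurable lborel \<and> (\<forall>y. f y \<ge> 0) \<and> P = density lborel f) \<longrightarrow>
        continuous_on UNIV (\<lambda>x. ID \<alpha> x P))
   \<comment> \<open>(vi) vanishing at infinity\<close>
   \<and> ((\<lambda>r. SUP x\<in>{x. norm x \<ge> r}. fst (ID \<alpha> x P)) \<longlongrightarrow> 0) at_top
   \<and> filterlim (\<lambda>r. INF x\<in>{x. norm x \<ge> r}. snd (ID \<alpha> x P)) at_top at_top"
  proof -
  interpret dpa P \<alpha>
    using prob borelP alpha_pos alpha_lt vol_pos
    by (simp add: dpa_def dp_def dpa_axioms_def dp_axioms_def)
  have v1: "upper_semicont (\<lambda>x. fst (ID \<alpha> x P))"
    unfolding upper_semicont_def fst_ID using usc_HD by blast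
  have v3: "(\<exists>f. f \<in> borel_measurable lborel \<and> (\<forall>y. f y \<ge> 0) \<and> P = density lborel f) \<longrightarrow>
        continuous_on UNIV (\<lambda>x. ID \<alpha> x P)"
  proof
    assume "\<exists>f. f \<in> borel_measurable lborel \<and> (\<forall>y. f y \<ge> 0) \<and> P = density lborel f"
    then obtain f where f: "f \<in> borel_measurable lborel" "P = density lborel f" by blast
    have eq: "(\<lambda>x. ID \<alpha> x P) = (\<lambda>x. (HD x P, snd (ID \<alpha> x P)))" by (simp add: ID_def)
    show "continuous_on UNIV (\<lambda>x. ID \<alpha> x P)"
      unfolding eq by (intro continuous_on_Pair HD_cont[OF f(2) f(1)] snd_cont)
  qed
  show ?thesis
  proof (intro conjI allI impI)
    fix A :: "real^'n^'n" and b x assume "invertible A"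
    then show "ID \<alpha> (A *v x + b) (distr P borel (\<lambda>y. A *v y + b)) = ID \<alpha> x P" by (rule part_i)
  next
    fix x show "halfspace_symmetric P x = (\<exists>c\<ge>1 / 2. ID \<alpha> x P = (c, 1))" by (rule part_ii)
  next
    fix x u and s t :: real assume "HD x P = maxdepth P" "0 \<le> s" "s \<le> t"
    from part_iii[OF this] show "fst (ID \<alpha> (x + t *\<^sub>R u) P) \<le> fst (ID \<alpha> (x + s *\<^sub>R u) P)"
      "snd (ID \<alpha> (x + s *\<^sub>R u) P) \<le> snd (ID \<alpha> (x + t *\<^sub>R u) P)" by auto
  next
    fix c1 c2 :: real
    show "convex {x. c1 \<le> fst (ID \<alpha> x P) \<and> snd (ID \<alpha> x P) \<le> c2}" using part_iv by blast
    assume "0 < c1"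
    then show "compact {x. c1 \<le> fst (ID \<alpha> x P) \<and> snd (ID \<alpha> x P) \<le> c2}" using part_iv by blast
  qed (use v1 snd_cont v3 part_vi1 part_vi2 in auto)
qed

end
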